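(* Run the UCB-like policy described in the context, with switch budget $L$ (so that $q=q(L,K)=\lfloor (L-N)/(K+1)\rfloor\ge 1$). Then the number of assortment switches $\Psi_T=\sum_{t}\mathbb{I}[S_t\neq S_{t+1}]$ made by the policy is at most $L$.
   Context: Setting: $N$ products $\mathcal N=\{1,\dots,N\}$, a no-purchase option $0$, $K$ resources $\mathcal K=\{1,\dots,K\}$, horizon of $T$ periods. Product $i$ gives revenue $r(i)\in[0,1]$ and consumes $a(i,k)\in[0,1]$ units of resource $k$; $r(0)=a(0,k)=0$. Resource $k$ has initial inventory $Tc(k)$, $c(k)>0$. For $v\in\mathbb R_{>0}^N$ and $S\subseteq\mathcal N$ the MNL probabilities are $\varphi(i,S\mid v)=v_i/(1+\sum_{j\in S}v_j)$ for $i\in S$, $\varphi(0,S\mid v)=1/(1+\sum_{j\in S}v_j)$, $\varphi(i,S\mid v)=0$ for $i\in\mathcal N\setminus S$. The unknown true vector $v^*$ satisfies $v_i^*\in[1/R,R]$. In period $t$ the retailer offers $S_t\subseteq\mathcal N$ and the customer chooses $I_t\in S_t\cup\{0\}$ with conditional probability $\varphi(I_t,S_t\mid v^* )$ given the past. UCB-like policy: parameters $\tau$ (a multiple of $N$), $L$, $\delta\in(0,1)$, $q=\lfloor (L-N)/(K+1)\rfloor$; $\Psi=\frac{R(1+NR)^2}{2}\sqrt{2+4\log\frac{2T^{1/2}q(K+1)N}{\delta}}$, $\varepsilon(n)=(\sqrt N+1)\Psi/\sqrt n$, $\omega=\frac{1}{T\min_k c(k)}\Big(4(\sqrt N+1)\sqrt{1+\frac{NT}{\tau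 q}}\Psi\sqrt{N^2T}+\sqrt{2T\log\frac{4(K+1)}{\delta}}+\frac{2N^2\Psi}{\sqrt\tau}\sqrt{2T\log\frac{4(K+1)}{\delta}}+\tau\Big)$. Warm start: for $i=1,\dots,N$ offer $S_t=\{i\}$ for $t=(i-1)\tau/N+1,\dots,i\tau/N$. Let $T_0=\tau$, $T_\ell=\ell\lfloor (T-\tau)/q\rfloor+\tau$ for $\ell=1,\dots,q$. In epoch $\ell$: let $n_i^{\ell-1}=\sum_{t=1}^{T_{\ell-1}}\mathbb I(i\in S_t)$; compute the MLE $\hat v^\ell=e^{\hat\theta}$, $\hat\theta$ minimizing $\mathcal L_{\ell-1}(\theta)=-\sum_{t=1}^{T_{\ell-1}}\big[\theta_{I_t}-\log(1+\sum_{i\in S_t}e^{\theta_i})\big]$ ($\theta_0:=0$); solve the UCB-LP: maximize $\sum_{S\subseteq\mathcal N}\sum_{i\in S}r(i)\big(\varphi(i,S\mid\hat v^\ell)+\varepsilon(n_i^{\ell-1})\big)y(S)$ subject to $\sum_{S}\sum_{i\in S}a(i,k)\big(\varphi(i,S\mid\hat v^\ell)-\varepsilon(n_i^{\ell-1})\big)y(S)\le(1-\omega)c(k)$ for all $k$, $\sum_S y(S)=1$, $y\ge 0$, obtaining a basic optimal solution $y_\ell$ (at most $K+1$ nonzero entries); draw an assortment independently from $y_\ell$ for each period $T_{\ell-1}+1,\dots,T_\ell$, let $N_\ell(S)$ be the number of draws equal to $S$, and offer each $S$ with $N_\ell(S)>0$ for $N_\ell(S)$ consecutive periods, updating inventories;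 stop once a resource is exhausted. *)

theory Defs
  imports Complex_Main
begin

text \<open>MNL choice probability phi(i, S | v); index 0 is the no-purchase option.\<close>
definition mnl_prob :: "(nat \<Rightarrow> real) \<Rightarrow> nat set \<Rightarrow> nat \<Rightarrow> real" where
  "mnl_prob v S i =
     (if i = 0 then 1 / (1 + (\<Sum>j\<in>S. v j))
      else if i \<in> S then v i / (1 + (\<Sum>j\<in>S. v j)) else 0)"

definition q_par :: "nat \<Rightarrow> nat \<Rightarrow> nat \<Rightarrow> nat" where
  "q_par L N K = (L - N) div (K + 1)"

definition Psi_par :: "nat \<Rightarrow> nat \<Rightarrow> nat \<Rightarrow> nat \<Rightarrow> real \<Rightarrow> real \<Rightarrow> real" where
  "Psi_par N K T q R \<delta> =
     R * (1 + real N * R)^2 / 2 *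
     sqrt (2 + 4 * ln (2 * sqrt (real T) * real q * real (K + 1) * real N / \<delta>))"

definition eps_par :: "nat \<Rightarrow> real \<Rightarrow> nat \<Rightarrow> real" where
  "eps_par N Psi n = (sqrt (real N) + 1) * Psi / sqrt (real n)"

definition omega_par ::
  "nat \<Rightarrow> nat \<Rightarrow> nat \<Rightarrow> nat \<Rightarrow> nat \<Rightarrow> (nat \<Rightarrow> real) \<Rightarrow> real \<Rightarrow> real \<Rightarrow> real" where
  "omega_par N K T \<tau> q c Psi \<delta> =
     1 / (real T * Min (c ` {1..K})) *
     ( 4 * (sqrt (real N) + 1) * sqrt (1 + real N * real T / (real \<tau> * real q)) * Psi
         * sqrt ((real N)^2 * real T)
     + sqrt (2 * real T * ln (4 * real (K + 1) / \<delta>))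
     + 2 * (real N)^2 * Psi / sqrt (real \<tau>) * sqrt (2 * real T * ln (4 * real (K + 1) / \<delta>))
     + real \<tau>)"

definition epoch_end :: "nat \<Rightarrow> nat \<Rightarrow> nat \<Rightarrow> nat \<Rightarrow> nat" where
  "epoch_end T \<tau> q l = l * ((T - \<tau>) div q) + \<tau>"

definition neg_loglik :: "(nat \<Rightarrow> nat set) \<Rightarrow> (nat \<Rightarrow> nat) \<Rightarrow> nat \<Rightarrow> (nat \<Rightarrow> real) \<Rightarrow> real" where
  "neg_loglik S I m \<theta> =
     - (\<Sum>t\<in>{1..m}. (\<theta>(0 := 0)) (I t) - ln (1 + (\<Sum>i\<in>S t. exp (\<theta> i))))"

definition offer_count :: "(nat \<Rightarrow> nat set) \<Rightarrow> nat \<Rightarrow> nat \<Rightarrow> nat" where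
  "offer_count S m i = card {t \<in> {1..m}. i \<in> S t}"

definition ucb_obj ::
  "nat \<Rightarrow> (nat \<Rightarrow> real) \<Rightarrow> (nat \<Rightarrow> real) \<Rightarrow> (nat \<Rightarrow> real) \<Rightarrow> (nat set \<Rightarrow> real) \<Rightarrow> real" where
  "ucb_obj N r v e y =
     (\<Sum>A\<in>Pow {1..N}. (\<Sum>i\<in>A. r i * (mnl_prob v A i + e i)) * y A)"

definition ucb_lhs ::
  "nat \<Rightarrow> (nat \<Rightarrow> nat \<Rightarrow> real) \<Rightarrow> nat \<Rightarrow> (nat \<Rightarrow> real) \<Rightarrow> (nat \<Rightarrow> real) \<Rightarrow> (nat set \<Rightarrow> real) \<Rightarrow> real" where
  "ucb_lhs N a k v e y =
     (\<Sum>A\<in>Pow {1..N}. (\<Sum>i\<in>A. a i k * (mnl_prob v A i - e i)) * y A)"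

definition ucb_feasible ::
  "nat \<Rightarrow> nat \<Rightarrow> (nat \<Rightarrow> nat \<Rightarrow> real) \<Rightarrow> (nat \<Rightarrow> real) \<Rightarrow> real
     \<Rightarrow> (nat \<Rightarrow> real) \<Rightarrow> (nat \<Rightarrow> real) \<Rightarrow> (nat set \<Rightarrow> real) \<Rightarrow> bool" where
  "ucb_feasible N K a c \<omega> v e y \<longleftrightarrow>
     (\<forall>A. 0 \<le> y A) \<and> (\<forall>A. A \<notin> Pow {1..N} \<longrightarrow> y A = 0) \<and>
     (\<Sum>A\<in>Pow {1..N}. y A) = 1 \<and>
     (\<forall>k\<in>{1..K}. ucb_lhs N a k v e y \<le> (1 - \<omega>) * c k)"

text \<open>A basic optimal solution of the UCB-LP (rendered as: optimal with at most K+1 nonzero entries).\<close>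
definition ucb_basic_opt ::
  "nat \<Rightarrow> nat \<Rightarrow> (nat \<Rightarrow> real) \<Rightarrow> (nat \<Rightarrow> nat \<Rightarrow> real) \<Rightarrow> (nat \<Rightarrow> real) \<Rightarrow> real
     \<Rightarrow> (nat \<Rightarrow> real) \<Rightarrow> (nat \<Rightarrow> real) \<Rightarrow> (nat set \<Rightarrow> real) \<Rightarrow> bool" where
  "ucb_basic_opt N K r a c \<omega> v e y \<longleftrightarrow>
     ucb_feasible N K a c \<omega> v e y \<and>
     (\<forall>y'. ucb_feasible N K a c \<omega> v e y' \<longrightarrow> ucb_obj N r v e y' \<le> ucb_obj N r v e y) \<and>
     card {A \<in> Pow {1..N}. y A \<noteq> 0} \<le> K + 1"

definition exhausted_before ::
  "nat \<Rightarrow> nat \<Rightarrow> (nat \<Rightarrow> nat \<Rightarrow> real) \<Rightarrow> (nat \<Rightarrow> real) \<Rightarrow> (nat \<Rightarrow> nat) \<Rightarrow> nat \<Rightarrow> bool" where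
  "exhausted_before K T a c I t \<longleftrightarrow>
     (\<exists>k\<in>{1..K}. (\<Sum>s\<in>{1..<t}. a (I s) k) \<ge> real T * c k)"

definition num_switches :: "nat \<Rightarrow> (nat \<Rightarrow> nat set) \<Rightarrow> nat" where
  "num_switches T S = card {t \<in> {1..<T}. S t \<noteq> S (Suc t)}"

end

theory Submission
  imports Defs
begin


lemma exh_mono:
  assumes nn: "\<forall>s. 1 \<le> s \<and> s < v \<longrightarrow> (\<forall>k\<in>{1..K}. 0 \<le> a (I s) k)"
    and uv: "u \<le> v" and ex: "exhausted_before K T a c I u"
  shows "exhausted_before K T a c I v"
proof -
  from ex obtain k where k: "k \<in> {1..K}" and h: "(\<Sum>s\<in>{1..<u}. a (I s) k) \<ge> real T * c k"
    unfolding exhausted_before_def by blast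
  have "(\<Sum>s\<in>{1..<u}. a (I s) k) \<le> (\<Sum>s\<in>{1..<v}. a (I s) k)"
    by (rule sum_mono2) (use uv nn k in auto)
  with h k show ?thesis unfolding exhausted_before_def by force
qed

lemma find_epoch:
  fixes f :: "nat \<Rightarrow> nat"
  assumes "f 0 < s" "s \<le> f q"
  shows "\<exists>l\<in>{1..q}. f (l-1) < s \<and> s \<le> f l"
  using assms
proof (induction q)
  case 0 then show ?case by simp
next
  case (Suc q)
  show ?case
  proof (cases "s \<le> f q")
    case True
    then obtain l where "l\<in>{1..q}" "f (l-1) < s \<and> s \<le> f l" using Suc by blast
    then show ?thesis by force
  next
    case False
    then show ?thesis using Suc.prems by force
  qed
qed

lemma find_epoch2:
  fixes f :: "nat \<Rightarrow> nat"
  assumes "f 0 \<le> s" "s < f q"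
  shows "\<exists>l\<in>{1..q}. f (l-1) \<le> s \<and> s < f l"
  using assms
proof (induction q)
  case 0 then show ?case by simp
next
  case (Suc q)
  show ?case
  proof (cases "s < f q")
    case True
    then obtain l where "l\<in>{1..q}" "f (l-1) \<le> s \<and> s < f l" using Suc by blast
    then show ?thesis by force
  next
    case False
    then show ?thesis using Suc.prems by force
  qed
qed

theorem theorem2:
  fixes N K T \<tau> L :: nat
    and r :: "nat \<Rightarrow> real" and a :: "nat \<Rightarrow> nat \<Rightarrow> real" and c :: "nat \<Rightarrow> real"
    and R \<delta> :: real and vstar :: "nat \<Rightarrow> real"
    and S :: "nat \<Rightarrow> nat set"  (* assortment offered in period t *)
    and I :: "nat \<Rightarrow> nat"        (* customer choice in period t *)
    and \<theta> :: "nat \<Rightarrow> nat \<Rightarrow> real" (* MLE computed at the start of epoch l *)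
    and y :: "nat \<Rightarrow> nat set \<Rightarrow> real" (* basic optimal UCB-LP solution of epoch l *)
  assumes N_pos: "N \<ge> 1" and K_pos: "K \<ge> 1"
    and r_range: "\<forall>i\<in>{1..N}. 0 \<le> r i \<and> r i \<le> 1" and r0: "r 0 = 0"
    and a_range: "\<forall>i\<in>{1..N}. \<forall>k\<in>{1..K}. 0 \<le> a i k \<and> a i k \<le> 1"
    and a0: "\<forall>k. a 0 k = 0"
    and c_pos: "\<forall>k\<in>{1..K}. c k > 0"
    and vstar_range: "\<forall>i\<in>{1..N}. 1 / R \<le> vstar i \<and> vstar i \<le> R"
    and \<delta>_range: "0 < \<delta> \<and> \<delta> < 1"
    and \<tau>_mult: "N dvd \<tau>"
    and q_pos: "q_par L N K \<ge> 1"
    \<comment> \<open>customer choices lie in the offered assortment or are the no-purchase option\<close>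
    and choice: "\<forall>t\<in>{1..T}. I t \<in> insert 0 (S t)"
    \<comment> \<open>after a resource is exhausted, or after the last epoch, nothing is offered\<close>
    and stopped: "\<forall>t\<in>{1..T}. (exhausted_before K T a c I t \<or> t > epoch_end T \<tau> (q_par L N K) (q_par L N K))
                     \<longrightarrow> S t = {}"
    \<comment> \<open>warm start\<close>
    and warm: "\<forall>i\<in>{1..N}. \<forall>t\<in>{1..T}. (i - 1) * (\<tau> div N) < t \<and> t \<le> i * (\<tau> div N)
                     \<and> \<not> exhausted_before K T a c I t \<longrightarrow> S t = {i}"
    \<comment> \<open>epoch l: MLE and basic optimal UCB-LP solution, computed if the epoch is reached\<close>
    and mle: "\<forall>l\<in>{1..q_par L N K}.
                 \<not> exhausted_before K T a c I (Suc (epoch_end T \<tau> (q_par L N K) (l - 1))) \<longrightarrow>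
                 (\<forall>\<theta>'. neg_loglik S I (epoch_end T \<tau> (q_par L N K) (l - 1)) (\<theta> l)
                        \<le> neg_loglik S I (epoch_end T \<tau> (q_par L N K) (l - 1)) \<theta>')"
    and lp: "\<forall>l\<in>{1..q_par L N K}.
                 \<not> exhausted_before K T a c I (Suc (epoch_end T \<tau> (q_par L N K) (l - 1))) \<longrightarrow>
                 ucb_basic_opt N K r a c
                   (omega_par N K T \<tau> (q_par L N K) c (Psi_par N K T (q_par L N K) R \<delta>) \<delta>)
                   (\<lambda>i. exp (\<theta> l i))
                   (\<lambda>i. eps_par N (Psi_par N K T (q_par L N K) R \<delta>)
                          (offer_count S (epoch_end T \<tau> (q_par L N K) (l - 1)) i))
                   (y l)"
    \<comment> \<open>in epoch l every offered assortment is drawn from the support of y_l\<close>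
    and draws: "\<forall>l\<in>{1..q_par L N K}. \<forall>t\<in>{1..T}.
                 epoch_end T \<tau> (q_par L N K) (l - 1) < t \<and> t \<le> epoch_end T \<tau> (q_par L N K) l
                 \<and> \<not> exhausted_before K T a c I t \<longrightarrow> y l (S t) > 0"
    \<comment> \<open>in epoch l each drawn assortment is offered in one block of consecutive periods\<close>
    and blocks: "\<forall>l\<in>{1..q_par L N K}. \<forall>t1 t2 t3.
                 epoch_end T \<tau> (q_par L N K) (l - 1) < t1 \<and> t1 < t2 \<and> t2 < t3
                 \<and> t3 \<le> epoch_end T \<tau> (q_par L N K) l \<and> t3 \<le> T
                 \<and> \<not> exhausted_before K T a c I t3 \<and> S t1 = S t3 \<longrightarrow> S t2 = S t1"
  shows "num_switches T S \<le> L"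
  proof -
  define q where "q = q_par L N K"
  define E where "E = epoch_end T \<tau> q"
  define ex where "ex = exhausted_before K T a c I"
  define d where "d = \<tau> div N"
  note stopped' = stopped[folded q_def, folded E_def ex_def]
  note warm' = warm[folded ex_def d_def]
  note lp' = lp[folded q_def, folded E_def ex_def]
  note draws' = draws[folded q_def, folded E_def ex_def]
  note blocks' = blocks[folded q_def, folded E_def ex_def]
  have E0: "E 0 = \<tau>" unfolding E_def epoch_end_def by simp
  have Emono: "E l \<le> E l'" if "l \<le> l'" for l l'
    unfolding E_def epoch_end_def using that by (simp add: mult_le_mono1)
  have tau: "\<tau> = N * d" unfolding d_def using \<tau>_mult by simp
  have supp: "A \<in> Pow {1..N}" if "l \<in> {1..q}" "\<not> ex (Suc (E (l-1)))" "y l A > 0" for l A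
    using lp'[rule_format, OF that(1,2)] that(3) unfolding ucb_basic_opt_def ucb_feasible_def
    by force
  have Iin: "I s = 0 \<or> I s \<in> {1..N}" if "1 \<le> s" "s \<le> T" for s
    using that
  proof (induction s rule: less_induct)
    case (less s)
    have nn: "\<forall>s'. 1 \<le> s' \<and> s' < s \<longrightarrow> (\<forall>k\<in>{1..K}. 0 \<le> a (I s') k)"
    proof (intro allI impI ballI)
      fix s' k assume "1 \<le> s' \<and> s' < s" "k \<in> {1..K}"
      then show "0 \<le> a (I s') k" using less.IH[of s'] less.prems a0 a_range by auto
    qed
    have mono: "ex u \<Longrightarrow> u \<le> s \<Longrightarrow> ex s" for u
      unfolding ex_def using exh_mono[of s K a I u T c] nn by blast
    have Ich: "I s \<in> insert 0 (S s)" using choice less.prems by auto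
    show ?case
    proof (cases "ex s \<or> s > E q")
      case True
      then have "S s = {}" using stopped' less.prems by auto
      then show ?thesis using Ich by auto
    next
      case False
      show ?thesis
      proof (cases "s \<le> \<tau>")
        case True
        define i where "i = (s - 1) div d + 1"
        have dpos: "d > 0" using True less.prems tau by (cases "d = 0") auto
        have dm: "(s - 1) div d * d + (s - 1) mod d = s - 1" by (rule div_mult_mod_eq)
        have md: "(s - 1) mod d < d" using dpos by simp
        have "(i - 1) * d \<le> s - 1" unfolding i_def using dm by (metis add_diff_cancel_right' le_add1)
        then have i1: "(i - 1) * d < s" using less.prems by linarith
        have "s - 1 < (s-1) div d * d + d" using dm md by linarith
        then have i2: "s \<le> i * d" unfolding i_def distrib_right using less.prems by simp
        have "s - 1 < N * d" using True tau less.prems by linarith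
        then have "(s - 1) div d < N" by (simp add: less_mult_imp_div_less)
        then have i3: "i \<in> {1..N}" unfolding i_def by simp
        have "S s = {i}" using warm'[rule_format, OF i3, of s] i1 i2 False less.prems by auto
        then show ?thesis using Ich i3 by auto
      next
        case False2: False
        then obtain l where l: "l \<in> {1..q}" "E (l-1) < s \<and> s \<le> E l"
          using find_epoch[of E s q] E0 False by auto
        have ys: "y l (S s) > 0" using draws' l False less.prems by auto
        have "\<not> ex (Suc (E (l-1)))" using mono[of "Suc (E (l-1))"] l False by (meson Suc_leI)
        then have "S s \<in> Pow {1..N}" using supp l ys by blast
        then show ?thesis using Ich by auto
      qed
    qed
  qed
  have nnall: "\<forall>s'. 1 \<le> s' \<and> s' < Suc T \<longrightarrow> (\<forall>k\<in>{1..K}. 0 \<le> a (I s') k)"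
    using Iin a0 a_range by fastforce
  have mono: "ex u \<Longrightarrow> u \<le> v \<Longrightarrow> v \<le> Suc T \<Longrightarrow> ex v" for u v
  proof -
    assume h: "ex u" "u \<le> v" "v \<le> Suc T"
    have "\<forall>s'. 1 \<le> s' \<and> s' < v \<longrightarrow> (\<forall>k\<in>{1..K}. 0 \<le> a (I s') k)" using nnall h(3) by auto
    then show "ex v" using exh_mono h unfolding ex_def by blast
  qed
  define P where "P t \<longleftrightarrow> ex t \<or> t > E q" for t
  have Pmono: "P u \<Longrightarrow> u \<le> v \<Longrightarrow> v \<le> Suc T \<Longrightarrow> P v" for u v
    unfolding P_def using mono by auto
  have Pempty: "P t \<Longrightarrow> 1 \<le> t \<Longrightarrow> t \<le> T \<Longrightarrow> S t = {}" for t
    unfolding P_def using stopped' by auto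
  define W where "W = {t \<in> {1..<T}. S t \<noteq> S (Suc t)}"
  define Z where "Z = {t \<in> W. P (Suc t)}"
  define Wa where "Wa = {t \<in> W. \<not> P (Suc t) \<and> Suc t \<le> \<tau>}"
  define Wb where "Wb = {t \<in> W. t \<in> E ` {0..<q}}"
  define Wc where "Wc l = {t \<in> W. E (l-1) < t \<and> Suc t \<le> E l \<and> \<not> ex (Suc t)}" for l
  have finW: "finite W" unfolding W_def by simp
  have cover: "W \<subseteq> Z \<union> Wa \<union> Wb \<union> (\<Union>l\<in>{1..q}. Wc l)"
  proof
    fix t assume tW: "t \<in> W"
    show "t \<in> Z \<union> Wa \<union> Wb \<union> (\<Union>l\<in>{1..q}. Wc l)"
    proof (cases "P (Suc t)")
      case True then show ?thesis using tW unfolding Z_def by auto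
    next
      case False
      show ?thesis
      proof (cases "Suc t \<le> \<tau>")
        case True then show ?thesis using tW False unfolding Wa_def by auto
      next
        case False2: False
        have "t < E q" using False unfolding P_def by auto
        then obtain l where l: "l \<in> {1..q}" "E (l-1) \<le> t \<and> t < E l"
          using find_epoch2[of E t q] E0 False2 by auto
        show ?thesis
        proof (cases "t = E (l-1)")
          case True
          then have "t \<in> Wb" using tW l unfolding Wb_def by force
          then show ?thesis by blast
        next
          case False3: False
          then have "t \<in> Wc l" using tW l False unfolding Wc_def P_def by auto
          then show ?thesis using l by blast
        qed
      qed
    qed
  qed
  have cZ: "card Z \<le> 1"
  proof -
    have "x = y" if "x \<in> Z" "y \<in> Z" for x y
    proof (rule ccontr)
      assume "x \<noteq> y"
      have key: "False" if "x' \<in> Z" "y' \<in> Z" "x' < y'" for x' y'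
      proof -
        have y1: "1 \<le> y'" "y' < T" using that(2) unfolding Z_def W_def by auto
        have "P (Suc x')" using that(1) unfolding Z_def by auto
        then have "P y'" "P (Suc y')" using Pmono that(3) y1 by auto
        then have "S y' = {}" "S (Suc y') = {}" using Pempty y1 by auto
        then show False using that(2) unfolding Z_def W_def by auto
      qed
      show False using key[OF that] key[OF that(2,1)] \<open>x \<noteq> y\<close> by linarith
    qed
    moreover have "finite Z" using finW unfolding Z_def by simp
    ultimately show ?thesis using card_le_Suc0_iff_eq[of Z] by simp
  qed
  have cWa: "card Wa \<le> N - 1"
  proof -
    have "Wa \<subseteq> (\<lambda>i. i * d) ` {1..<N}"
    proof
      fix t assume tW: "t \<in> Wa"
      have t1: "1 \<le> t" "Suc t \<le> \<tau>" "\<not> ex (Suc t)" "t < T" "S t \<noteq> S (Suc t)"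
        using tW unfolding Wa_def W_def P_def by auto
      have nex: "\<not> ex t" using mono t1 by fastforce
      have dpos: "d > 0" using t1 tau by (cases "d = 0") auto
      have dm: "t div d * d + t mod d = t" by (rule div_mult_mod_eq)
      have md: "t mod d < d" using dpos by simp
      have "t < N * d" using t1 tau by linarith
      then have tlt: "t div d < N" by (simp add: less_mult_imp_div_less)
      have "t mod d = 0"
      proof (rule ccontr)
        assume nz: "t mod d \<noteq> 0"
        define i where "i = t div d + 1"
        have i3: "i \<in> {1..N}" using tlt unfolding i_def by auto
        have a1: "(i - 1) * d < t" "t \<le> i * d" "Suc t \<le> i * d"
        proof -
          have e1: "(i - 1) * d = t div d * d" "i * d = t div d * d + d" by (simp_all add: i_def)
          show "(i - 1) * d < t" "t \<le> i * d" "Suc t \<le> i * d" unfolding e1 using dm md nz by linarith+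
        qed
        have "S t = {i}" using warm'[rule_format, OF i3, of t] a1 t1 nex by auto
        moreover have "S (Suc t) = {i}" using warm'[rule_format, OF i3, of "Suc t"] a1 t1 by auto
        ultimately show False using t1 by auto
      qed
      then have "t = t div d * d" using dm by simp
      moreover have "t div d \<ge> 1" using \<open>t mod d = 0\<close> dm t1 by (cases "t div d = 0") auto
      ultimately show "t \<in> (\<lambda>i. i * d) ` {1..<N}" using tlt by force
    qed
    then have "card Wa \<le> card ((\<lambda>i. i * d) ` {1..<N})" by (rule card_mono[rotated]) simp
    also have "\<dots> \<le> card {1..<N}" by (rule card_image_le) simp
    finally show ?thesis by simp
  qed
  have cWb: "card Wb \<le> q"
  proof -
    have "Wb \<subseteq> E ` {0..<q}" unfolding Wb_def by auto
    then have "card Wb \<le> card (E ` {0..<q})" by (rule card_mono[rotated]) simp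
    also have "\<dots> \<le> card {0..<q}" by (rule card_image_le) simp
    finally show ?thesis by simp
  qed
  have cWc: "card (Wc l) \<le> K" if l: "l \<in> {1..q}" for l
  proof (cases "Wc l = {}")
    case True then show ?thesis by simp
  next
    case False
    then obtain t0 where t0: "t0 \<in> Wc l" by blast
    define e where "e = Suc (E (l-1))"
    have t0p: "E (l-1) < t0" "Suc t0 \<le> E l" "\<not> ex (Suc t0)" "t0 < T"
      using t0 unfolding Wc_def W_def by auto
    have ee: "e \<le> t0" unfolding e_def using t0p by simp
    have nexe: "\<not> ex e" using mono[of e "Suc t0"] ee t0p by auto
    define F where "F = {A \<in> Pow {1..N}. y l A \<noteq> 0}"
    have bo: "ucb_basic_opt N K r a c
                   (omega_par N K T \<tau> q c (Psi_par N K T q R \<delta>) \<delta>)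
                   (\<lambda>i. exp (\<theta> l i))
                   (\<lambda>i. eps_par N (Psi_par N K T q R \<delta>)
                          (offer_count S (E (l - 1)) i))
                   (y l)"
      using lp' l nexe unfolding e_def by blast
    have cF: "card F \<le> K + 1" using bo unfolding ucb_basic_opt_def F_def by blast
    have finF: "finite F" unfolding F_def by simp
    have inF: "A \<in> F" if "y l A > 0" for A
      using supp[OF l] nexe that unfolding F_def e_def by auto
    have SeF: "S e \<in> F"
    proof -
      have "y l (S e) > 0" using draws' l ee t0p nexe unfolding e_def by auto
      then show ?thesis by (rule inF)
    qed
    have inj: "inj_on (\<lambda>t. S (Suc t)) (Wc l)"
    proof (rule inj_onI)
      have key: "False" if "t \<in> Wc l" "t' \<in> Wc l" "S (Suc t) = S (Suc t')" "t < t'" for t t'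
      proof -
        have h: "E (l-1) < t" "Suc t' \<le> E l" "\<not> ex (Suc t')" "t' < T" "S t' \<noteq> S (Suc t')"
          using that(1,2) unfolding Wc_def W_def by auto
        show False
        proof (cases "Suc t = t'")
          case True then show False using h that(3) by simp
        next
          case False
          then have "S t' = S (Suc t)"
            using blocks'[rule_format, OF l, of "Suc t" t' "Suc t'"] h that by auto
          then show False using h that(3) by simp
        qed
      qed
      fix t t' assume "t \<in> Wc l" "t' \<in> Wc l" "S (Suc t) = S (Suc t')"
      then show "t = t'" using key[of t t'] key[of t' t] by (metis linorder_neqE_nat)
    qed
    have sub: "(\<lambda>t. S (Suc t)) ` Wc l \<subseteq> F - {S e}"
    proof
      fix A assume "A \<in> (\<lambda>t. S (Suc t)) ` Wc l"
      then obtain t where t: "t \<in> Wc l" "A = S (Suc t)" by blast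
      have h: "E (l-1) < t" "Suc t \<le> E l" "\<not> ex (Suc t)" "t < T" "S t \<noteq> S (Suc t)"
        using t unfolding Wc_def W_def by auto
      have "y l A > 0" using draws' l h t(2) by auto
      then have "A \<in> F" by (rule inF)
      moreover have "A \<noteq> S e"
      proof
        assume eq: "A = S e"
        have "e \<le> t" using h unfolding e_def by simp
        show False
        proof (cases "e = t")
          case True then show False using h eq t(2) by simp
        next
          case False
          then have "S t = S e"
            using blocks'[rule_format, OF l, of e t "Suc t"] h eq t(2) \<open>e \<le> t\<close> unfolding e_def by auto
          then show False using h eq t(2) by simp
        qed
      qed
      ultimately show "A \<in> F - {S e}" by simp
    qed
    have "card (Wc l) = card ((\<lambda>t. S (Suc t)) ` Wc l)" using card_image[OF inj] by simp
    also have "\<dots> \<le> card (F - {S e})" by (rule card_mono[OF _ sub]) (use finF in simp)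
    also have "\<dots> = card F - 1" using SeF finF by simp
    finally show ?thesis using cF by simp
  qed
  have "card W \<le> card Z + card Wa + card Wb + card (\<Union>l\<in>{1..q}. Wc l)"
  proof -
    have "card W \<le> card (Z \<union> Wa \<union> Wb \<union> (\<Union>l\<in>{1..q}. Wc l))"
      by (rule card_mono[OF _ cover]) (auto simp: Z_def Wa_def Wb_def Wc_def W_def)
    also have "\<dots> \<le> card Z + card Wa + card Wb + card (\<Union>l\<in>{1..q}. Wc l)"
      by (meson add_le_mono card_Un_le le_trans order_refl)
    finally show ?thesis .
  qed
  also have "card (\<Union>l\<in>{1..q}. Wc l) \<le> (\<Sum>l\<in>{1..q}. card (Wc l))" by (rule card_UN_le) simp
  also have "\<dots> \<le> (\<Sum>l\<in>{1..q}. K)" by (rule sum_mono) (use cWc in auto)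
  finally have "card W \<le> 1 + (N - 1) + q + q * K" using cZ cWa cWb by simp
  moreover have "q * (K + 1) \<le> L - N" unfolding q_def q_par_def by (rule div_times_less_eq_dividend)
  moreover have "L - N \<ge> 1" using q_pos unfolding q_par_def by (cases "L - N = 0") auto
  ultimately have "card W \<le> L" using N_pos by (simp add: algebra_simps)
  then show ?thesis unfolding num_switches_def W_def .
qed

end
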